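(* Let $\Lambda=\langle a_1\rangle\perp\langle a_2\rangle$ be a skew-hermitian lattice such that $N(a_2)\in N(a_1)k^{*2}$ and the extension $k(a_1)/k$ is ramified. Then there exists a skew-hermitian lattice $L=\langle q\rangle\perp\langle\epsilon q\rangle$, with $q\in D^*$ and $\epsilon\in k^*$, such that $H(\Lambda)=H(L)$. Moreover, $q$ can be taken to be $q'$ for any pure quaternion $q'\in D^*$ with $N(q')\in N(a_1)k^{*2}$.
   Context: $k$ is a dyadic local field of characteristic $0$, $D$ the quaternion division algebra over $k$ with involution $q\mapsto\bar q$, reduced norm $N$, maximal order $\mathcal{O}_D$. A skew-hermitian space is a free $D$-module $V$ with nondegenerate $h$, $D$-linear in the first variable, $h(x,y)=-\overline{h(y,x)}$. For a pure quaternion $a$, $\langle a\rangle$ denotes a rank-one lattice $\mathcal{O}_Dx$ with $h(x,x)=a$, and $\perp$ denotes orthogonal sum. $H(\Lambda)\supseteq k^{*2}$ is defined by $H(\Lambda)/k^{*2}=\theta(\mathcal{U}^+_k(\Lambda))$, where $\mathcal{U}^+_k(\Lambda)$ is the group of isometries of $h$ preserving $\Lambda$ and $\theta$ the spinor norm ($\theta((s;\sigma))=N(\sigma)k^{*2}$ for simple rotations $(s;\sigma)(x)=x-h(x,s)\sigma^{-1}s$, $\sigma-\bar\sigma=h(s,s)$). *)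

theory Defs
  imports Complex_Main
begin

text \<open>The field k is a type of class field_char_0 together with a normalized
discrete valuation v (the value at 0 is irrelevant) for which k is complete,
with finite residue field of characteristic 2 (i.e. v 2 > 0).\<close>

definition val_ring :: "('k::field_char_0 \<Rightarrow> int) \<Rightarrow> 'k set" where
  "val_ring v = {x. x = 0 \<or> v x \<ge> 0}"

definition dyadic_local_field :: "('k::field_char_0 \<Rightarrow> int) \<Rightarrow> bool" where
  "dyadic_local_field v \<longleftrightarrow>
     (\<forall>x y. x \<noteq> 0 \<longrightarrow> y \<noteq> 0 \<longrightarrow> v (x * y) = v x + v y) \<and>
     (\<forall>x y. x \<noteq> 0 \<longrightarrow> y \<noteq> 0 \<longrightarrow> x + y \<noteq> 0 \<longrightarrow> v (x + y) \<ge> min (v x) (v y)) \<and>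
     (\<exists>\<pi>. \<pi> \<noteq> 0 \<and> v \<pi> = 1) \<and>
     (\<forall>f :: nat \<Rightarrow> 'k.
        (\<forall>n::int. \<exists>N. \<forall>m\<ge>N. \<forall>p\<ge>N. f m = f p \<or> v (f m - f p) \<ge> n) \<longrightarrow>
        (\<exists>L. \<forall>n::int. \<exists>N. \<forall>m\<ge>N. f m = L \<or> v (f m - L) \<ge> n)) \<and>
     (\<exists>S. finite S \<and> S \<subseteq> val_ring v \<and>
        (\<forall>x\<in>val_ring v. \<exists>s\<in>S. x = s \<or> v (x - s) \<ge> 1)) \<and>
     v 2 \<ge> 1"

text \<open>Elements a + b i + c j + d ij with i^2 = alpha, j^2 = beta, ij = - ji.\<close>

datatype 'k quat = Quat 'k 'k 'k 'k

fun qre :: "'k quat \<Rightarrow> 'k" where "qre (Quat a b c d) = a"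

definition qof :: "'k::field \<Rightarrow> 'k quat" where
  "qof c = Quat c 0 0 0"

fun qadd :: "'k::field quat \<Rightarrow> 'k quat \<Rightarrow> 'k quat" where
  "qadd (Quat a1 b1 c1 d1) (Quat a2 b2 c2 d2) = Quat (a1+a2) (b1+b2) (c1+c2) (d1+d2)"

fun qneg :: "'k::field quat \<Rightarrow> 'k quat" where
  "qneg (Quat a b c d) = Quat (-a) (-b) (-c) (-d)"

definition qsub :: "'k::field quat \<Rightarrow> 'k quat \<Rightarrow> 'k quat" where
  "qsub p q = qadd p (qneg q)"

fun qscal :: "'k::field \<Rightarrow> 'k quat \<Rightarrow> 'k quat" where
  "qscal t (Quat a b c d) = Quat (t*a) (t*b) (t*c) (t*d)"

fun qmul :: "'k::field \<Rightarrow> 'k \<Rightarrow> 'k quat \<Rightarrow> 'k quat \<Rightarrow> 'k quat" where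
  "qmul \<alpha> \<beta> (Quat a1 b1 c1 d1) (Quat a2 b2 c2 d2) =
     Quat (a1*a2 + \<alpha>*b1*b2 + \<beta>*c1*c2 - \<alpha>*\<beta>*d1*d2)
          (a1*b2 + b1*a2 - \<beta>*c1*d2 + \<beta>*d1*c2)
          (a1*c2 + c1*a2 + \<alpha>*b1*d2 - \<alpha>*d1*b2)
          (a1*d2 + d1*a2 + b1*c2 - c1*b2)"

fun qconj :: "'k::field quat \<Rightarrow> 'k quat" where
  "qconj (Quat a b c d) = Quat a (-b) (-c) (-d)"

text \<open>Reduced norm N(q) = q * conj q.\<close>
fun qnorm :: "'k::field \<Rightarrow> 'k \<Rightarrow> 'k quat \<Rightarrow> 'k" where
  "qnorm \<alpha> \<beta> (Quat a b c d) = a^2 - \<alpha>*b^2 - \<beta>*c^2 + \<alpha>*\<beta>*d^2"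

definition qinv :: "'k::field \<Rightarrow> 'k \<Rightarrow> 'k quat \<Rightarrow> 'k quat" where
  "qinv \<alpha> \<beta> q = qscal (inverse (qnorm \<alpha> \<beta> q)) (qconj q)"

definition qpure :: "'k::field quat \<Rightarrow> bool" where
  "qpure q \<longleftrightarrow> qre q = 0"

definition quat_division :: "'k::field \<Rightarrow> 'k \<Rightarrow> bool" where
  "quat_division \<alpha> \<beta> \<longleftrightarrow> \<alpha> \<noteq> 0 \<and> \<beta> \<noteq> 0 \<and> (\<forall>q. qnorm \<alpha> \<beta> q = 0 \<longrightarrow> q = Quat 0 0 0 0)"

text \<open>Maximal order of the division algebra D: quaternions of integral reduced norm.\<close>
definition max_order :: "('k::field_char_0 \<Rightarrow> int) \<Rightarrow> 'k \<Rightarrow> 'k \<Rightarrow> 'k quat set" where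
  "max_order v \<alpha> \<beta> = {q. qnorm \<alpha> \<beta> q \<in> val_ring v}"

text \<open>The subfield k(a) of D, and ramification of k(a)/k: the unique extension of v
to k(a) is w(x) = v(N(x))/2 (N restricted to k(a) is the field norm); k(a)/k is
ramified iff the ramification index is > 1, i.e. the value group w(k(a)^*) is strictly
larger than v(k^*) = Z.\<close>
definition qsubfield :: "'k::field quat \<Rightarrow> 'k quat set" where
  "qsubfield a = {qadd (qof x) (qscal y a) | x y. True}"

definition ext_val :: "('k::field_char_0 \<Rightarrow> int) \<Rightarrow> 'k \<Rightarrow> 'k \<Rightarrow> 'k quat \<Rightarrow> rat" where
  "ext_val v \<alpha> \<beta> e = of_int (v (qnorm \<alpha> \<beta> e)) / 2"

definition ramified_ext :: "('k::field_char_0 \<Rightarrow> int) \<Rightarrow> 'k \<Rightarrow> 'k \<Rightarrow> 'k quat \<Rightarrow> bool" where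
  "ramified_ext v \<alpha> \<beta> a \<longleftrightarrow>
     (\<exists>e\<in>qsubfield a. e \<noteq> Quat 0 0 0 0 \<and> ext_val v \<alpha> \<beta> e \<notin> \<int>)"

text \<open>V = D x D with basis x1 = (1,0), x2 = (0,1), h(x_i,x_i) = a_i, h(x1,x2) = 0:
h(x,y) = x1 a1 conj(y1) + x2 a2 conj(y2) (D-linear in the first variable).\<close>

type_synonym 'k vec2 = "'k quat \<times> 'k quat"

definition vadd :: "'k::field vec2 \<Rightarrow> 'k vec2 \<Rightarrow> 'k vec2" where
  "vadd x y = (qadd (fst x) (fst y), qadd (snd x) (snd y))"

definition vsmul :: "'k::field \<Rightarrow> 'k \<Rightarrow> 'k quat \<Rightarrow> 'k vec2 \<Rightarrow> 'k vec2" where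
  "vsmul \<alpha> \<beta> d x = (qmul \<alpha> \<beta> d (fst x), qmul \<alpha> \<beta> d (snd x))"

definition vsub :: "'k::field vec2 \<Rightarrow> 'k vec2 \<Rightarrow> 'k vec2" where
  "vsub x y = (qsub (fst x) (fst y), qsub (snd x) (snd y))"

definition hform :: "'k::field \<Rightarrow> 'k \<Rightarrow> 'k quat \<Rightarrow> 'k quat \<Rightarrow> 'k vec2 \<Rightarrow> 'k vec2 \<Rightarrow> 'k quat" where
  "hform \<alpha> \<beta> a1 a2 x y =
     qadd (qmul \<alpha> \<beta> (qmul \<alpha> \<beta> (fst x) a1) (qconj (fst y)))
          (qmul \<alpha> \<beta> (qmul \<alpha> \<beta> (snd x) a2) (qconj (snd y)))"

definition diag_lattice :: "('k::field_char_0 \<Rightarrow> int) \<Rightarrow> 'k \<Rightarrow> 'k \<Rightarrow> 'k vec2 set" where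
  "diag_lattice v \<alpha> \<beta> = max_order v \<alpha> \<beta> \<times> max_order v \<alpha> \<beta>"

definition isometry :: "'k::field \<Rightarrow> 'k \<Rightarrow> 'k quat \<Rightarrow> 'k quat \<Rightarrow> ('k vec2 \<Rightarrow> 'k vec2) \<Rightarrow> bool" where
  "isometry \<alpha> \<beta> a1 a2 u \<longleftrightarrow> bij u \<and>
     (\<forall>x y. u (vadd x y) = vadd (u x) (u y)) \<and>
     (\<forall>d x. u (vsmul \<alpha> \<beta> d x) = vsmul \<alpha> \<beta> d (u x)) \<and>
     (\<forall>x y. hform \<alpha> \<beta> a1 a2 (u x) (u y) = hform \<alpha> \<beta> a1 a2 x y)"

definition srot :: "'k::field \<Rightarrow> 'k \<Rightarrow> 'k quat \<Rightarrow> 'k quat \<Rightarrow> 'k vec2 \<Rightarrow> 'k quat \<Rightarrow> 'k vec2 \<Rightarrow> 'k vec2" where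
  "srot \<alpha> \<beta> a1 a2 s \<sigma> x =
     vsub x (vsmul \<alpha> \<beta> (qmul \<alpha> \<beta> (hform \<alpha> \<beta> a1 a2 x s) (qinv \<alpha> \<beta> \<sigma>)) s)"

definition srot_data :: "'k::field \<Rightarrow> 'k \<Rightarrow> 'k quat \<Rightarrow> 'k quat \<Rightarrow> 'k vec2 \<Rightarrow> 'k quat \<Rightarrow> bool" where
  "srot_data \<alpha> \<beta> a1 a2 s \<sigma> \<longleftrightarrow> \<sigma> \<noteq> Quat 0 0 0 0 \<and>
     qsub \<sigma> (qconj \<sigma>) = hform \<alpha> \<beta> a1 a2 s s"

text \<open>H(Lambda): the set of c in k^* such that c k^{*2} = theta(u) for some isometry u
preserving Lambda, where theta(u) = N(sigma_1)...N(sigma_m) k^{*2} for a factorisation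
u = (s_1;sigma_1) ... (s_m;sigma_m) into simple rotations.\<close>
definition Hgroup :: "('k::field_char_0 \<Rightarrow> int) \<Rightarrow> 'k \<Rightarrow> 'k \<Rightarrow> 'k quat \<Rightarrow> 'k quat \<Rightarrow> 'k set" where
  "Hgroup v \<alpha> \<beta> a1 a2 = {c. c \<noteq> 0 \<and>
     (\<exists>u. isometry \<alpha> \<beta> a1 a2 u \<and> u ` diag_lattice v \<alpha> \<beta> = diag_lattice v \<alpha> \<beta> \<and>
        (\<exists>rs :: ('k vec2 \<times> 'k quat) list.
           (\<forall>(s,\<sigma>)\<in>set rs. srot_data \<alpha> \<beta> a1 a2 s \<sigma>) \<and>
           u = foldr (\<lambda>(s,\<sigma>) f. srot \<alpha> \<beta> a1 a2 s \<sigma> \<circ> f) rs id \<and>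
           (\<exists>t. t \<noteq> 0 \<and> c = prod_list (map (\<lambda>(s,\<sigma>). qnorm \<alpha> \<beta> \<sigma>) rs) * t^2)))}"

end

theory Submission
  imports Defs
begin


abbreviation Q0 :: "'k::field quat" where "Q0 \<equiv> Quat 0 0 0 0"

lemma qmul_assoc: "qmul al be (qmul al be p q) r = qmul al be p (qmul al be q r)"
  by (cases p; cases q; cases r) (simp add: algebra_simps)
lemma qnorm_mul: "qnorm al be (qmul al be p q) = qnorm al be p * qnorm al be q"
  by (cases p; cases q) (simp add: algebra_simps power2_eq_square)
lemma qconj_mul: "qconj (qmul al be p q) = qmul al be (qconj q) (qconj p)"
  by (cases p; cases q) (simp add: algebra_simps)
lemma qmul_qof_left: "qmul al be (qof c) p = qscal c p"
  by (cases p) (simp add: qof_def)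
lemma qmul_qof_right: "qmul al be p (qof c) = qscal c p"
  by (cases p) (simp add: qof_def algebra_simps)
lemma qmul_scal_left: "qmul al be (qscal c p) q = qscal c (qmul al be p q)"
  by (cases p; cases q) (simp add: algebra_simps)
lemma qmul_scal_right: "qmul al be p (qscal c q) = qscal c (qmul al be p q)"
  by (cases p; cases q) (simp add: algebra_simps)
lemma qscal_qscal: "qscal c (qscal d p) = qscal (c*d) p"
  by (cases p) (simp add: algebra_simps)
lemma qscal_one[simp]: "qscal 1 p = p"
  by (cases p) simp
lemma qmul_conj_right: "qmul al be p (qconj p) = qof (qnorm al be p)"
  by (cases p) (simp add: qof_def algebra_simps power2_eq_square)
lemma qmul_conj_left: "qmul al be (qconj p) p = qof (qnorm al be p)"
  by (cases p) (simp add: qof_def algebra_simps power2_eq_square)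
lemma qconj_conj[simp]: "qconj (qconj p) = p"
  by (cases p) simp
lemma qconj_qscal: "qconj (qscal c p) = qscal c (qconj p)"
  by (cases p) simp
lemma qconj_qof[simp]: "qconj (qof c) = qof c"
  by (simp add: qof_def)
lemma qnorm_conj[simp]: "qnorm al be (qconj p) = qnorm al be p"
  by (cases p) simp
lemma qnorm_scal: "qnorm al be (qscal c p) = c^2 * qnorm al be p"
  by (cases p) (simp add: algebra_simps power2_eq_square)
lemma qnorm_qof[simp]: "qnorm al be (qof c) = c^2"
  by (simp add: qof_def)
lemma qmul_add_left: "qmul al be (qadd p q) r = qadd (qmul al be p r) (qmul al be q r)"
  by (cases p; cases q; cases r) (simp add: algebra_simps)
lemma qmul_add_right: "qmul al be p (qadd q r) = qadd (qmul al be p q) (qmul al be p r)"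
  by (cases p; cases q; cases r) (simp add: algebra_simps)
lemma qscal_add: "qscal c (qadd p q) = qadd (qscal c p) (qscal c q)"
  by (cases p; cases q) (simp add: algebra_simps)
lemma qadd_comm: "qadd p q = qadd q (p::'k::field quat)"
  by (cases p; cases q) (simp add: algebra_simps)
lemma qscal_eq0: "qscal c p = Q0 \<longleftrightarrow> c = 0 \<or> p = (Q0::'k::field quat)"
  by (cases p) auto
lemma qof_one_mul[simp]: "qmul al be (qof 1) p = p"
  by (simp add: qmul_qof_left)
lemma qmul_one_qof[simp]: "qmul al be p (qof 1) = p"
  by (simp add: qmul_qof_right)
lemma qnorm_zero:
  assumes "quat_division al be" shows "qnorm al be p = 0 \<longleftrightarrow> p = Q0"
  using assms by (auto simp: quat_division_def)
lemma qinv_right: "qnorm al be p \<noteq> 0 \<Longrightarrow> qmul al be p (qinv al be p) = qof 1"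
  by (simp add: qinv_def qmul_scal_right qmul_conj_right) (simp add: qof_def)
lemma qinv_left: "qnorm al be p \<noteq> 0 \<Longrightarrow> qmul al be (qinv al be p) p = qof 1"
  by (simp add: qinv_def qmul_scal_left qmul_conj_left) (simp add: qof_def)
lemma qinv_scal: "(c::'k::field) \<noteq> 0 \<Longrightarrow> qinv al be (qscal c s) = qscal (inverse c) (qinv al be s)"
  apply (simp add: qinv_def qnorm_scal qconj_qscal qscal_qscal)
  apply (cases "qnorm al be s = 0")
   apply (simp)
  apply (rule arg_cong[where f="\<lambda>x. qscal x (qconj s)"])
  apply (simp add: field_simps power2_eq_square)
  done
lemma qnorm_qinv: "qnorm al be (qinv al be p) = inverse (qnorm al be p)"
  apply (simp add: qinv_def qnorm_scal)
  apply (cases "qnorm al be p = 0") apply simp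
  apply (simp add: field_simps power2_eq_square)
  done
lemma pure_sq: "qpure p \<Longrightarrow> qmul al be p p = qof (- qnorm al be p)"
  by (cases p) (simp add: qpure_def qof_def algebra_simps power2_eq_square)

lemma vmult: "dyadic_local_field v \<Longrightarrow> x \<noteq> 0 \<Longrightarrow> y \<noteq> 0 \<Longrightarrow> v (x*y) = v x + v y"
  by (simp add: dyadic_local_field_def)
lemma vone: "dyadic_local_field v \<Longrightarrow> v 1 = 0"
  using vmult[of v 1 1] by simp
lemma vinv: "dyadic_local_field v \<Longrightarrow> (x::'k::field_char_0) \<noteq> 0 \<Longrightarrow> v (inverse x) = - v x"
  using vmult[of v x "inverse x"] vone[of v] by simp
lemma vpow: "dyadic_local_field v \<Longrightarrow> (x::'k::field_char_0) \<noteq> 0 \<Longrightarrow> v (x ^ n) = int n * v x"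
  by (induction n) (auto simp: vone vmult algebra_simps)
lemma vsurj: assumes "dyadic_local_field (v::'k::field_char_0 \<Rightarrow> int)" shows "\<exists>s. s \<noteq> 0 \<and> v s = k"
proof -
  obtain p where p: "p \<noteq> 0" "v p = 1" using assms by (auto simp: dyadic_local_field_def)
  show ?thesis
  proof (cases "k \<ge> 0")
    case True
    then show ?thesis using p vpow[OF assms p(1), of "nat k"] by (intro exI[of _ "p ^ nat k"]) auto
  next
    case False
    then show ?thesis using p vpow[OF assms p(1), of "nat (-k)"] vinv[OF assms, of "p ^ nat (-k)"]
      by (intro exI[of _ "inverse (p ^ nat (-k))"]) auto
  qed
qed

definition qunit :: "('k::field_char_0 \<Rightarrow> int) \<Rightarrow> 'k \<Rightarrow> 'k \<Rightarrow> 'k quat \<Rightarrow> bool" where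
  "qunit v al be m \<longleftrightarrow> qnorm al be m \<noteq> 0 \<and> v (qnorm al be m) = 0"

lemma qunit_inv: "dyadic_local_field v \<Longrightarrow> qunit v al be m \<Longrightarrow> qunit v al be (qinv al be m)"
  by (simp add: qunit_def qnorm_qinv vinv)

lemma qunit_mul: "dyadic_local_field v \<Longrightarrow> qunit v al be m \<Longrightarrow> qunit v al be n \<Longrightarrow> qunit v al be (qmul al be m n)"
  by (simp add: qunit_def qnorm_mul vmult)

lemma max_order_mul: "dyadic_local_field v \<Longrightarrow> qunit v al be m \<Longrightarrow> x \<in> max_order v al be \<Longrightarrow>
   qmul al be x m \<in> max_order v al be"
  by (cases "qnorm al be x = 0") (auto simp: max_order_def val_ring_def qunit_def qnorm_mul vmult)



lemma vsub_eq: "vsub x y = vadd x (vsmul al be (qof (-1)) y)"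
  by (cases x; cases y; rename_tac a b c d; case_tac a; case_tac b; case_tac c; case_tac d)
     (simp add: vsub_def vadd_def vsmul_def qsub_def qof_def)

lemma qsub_conj_scal: "qsub (qscal c p) (qconj (qscal c p)) = qscal c (qsub p (qconj p))"
  by (cases p) (simp add: qsub_def algebra_simps)

lemma prod_scal: "prod_list (map (\<lambda>(s,\<sigma>). qnorm al be \<sigma>) (map (\<lambda>(s,\<sigma>). (g s, qscal k \<sigma>)) rs))
   = (k^2)^length rs * prod_list (map (\<lambda>(s,\<sigma>). qnorm al be \<sigma>) rs)"
  by (induction rs) (auto simp: qnorm_scal)

lemma G0:
  fixes \<phi> \<psi> :: "'k::field_char_0 vec2 \<Rightarrow> 'k vec2"
  assumes inv1: "\<And>x. \<psi> (\<phi> x) = x" and inv2: "\<And>x. \<phi> (\<psi> x) = x"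
    and add\<psi>: "\<And>x y. \<psi> (vadd x y) = vadd (\<psi> x) (\<psi> y)"
    and lin\<psi>: "\<And>d x. \<psi> (vsmul al be d x) = vsmul al be d (\<psi> x)"
    and add\<phi>: "\<And>x y. \<phi> (vadd x y) = vadd (\<phi> x) (\<phi> y)"
    and lin\<phi>: "\<And>d x. \<phi> (vsmul al be d x) = vsmul al be d (\<phi> x)"
    and L\<phi>: "\<phi> ` diag_lattice v al be = diag_lattice v al be"
    and L\<psi>: "\<psi> ` diag_lattice v al be = diag_lattice v al be"
    and c: "c \<noteq> 0"
    and h: "\<And>x y. hform al be a1 a2 (\<phi> x) (\<phi> y) = qscal c (hform al be b1 b2 x y)"
  shows "Hgroup v al be a1 a2 \<subseteq> Hgroup v al be b1 b2"
proof
  fix z assume "z \<in> Hgroup v al be a1 a2"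
  then obtain u rs t where z0: "z \<noteq> 0" and iso: "isometry al be a1 a2 u"
    and uL: "u ` diag_lattice v al be = diag_lattice v al be"
    and dat: "\<forall>(s,\<sigma>)\<in>set rs. srot_data al be a1 a2 s \<sigma>"
    and ueq: "u = foldr (\<lambda>(s,\<sigma>) f. srot al be a1 a2 s \<sigma> \<circ> f) rs id"
    and t: "t \<noteq> 0" "z = prod_list (map (\<lambda>(s,\<sigma>). qnorm al be \<sigma>) rs) * t^2"
    unfolding Hgroup_def by blast
  have hB: "hform al be b1 b2 (\<psi> x) (\<psi> y) = qscal (inverse c) (hform al be a1 a2 x y)" for x y
    using h[of "\<psi> x" "\<psi> y"] c by (simp add: inv2 qscal_qscal)
  have sub\<psi>: "\<psi> (vsub x y) = vsub (\<psi> x) (\<psi> y)" for x y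
    by (simp add: vsub_eq[of _ _ al be] add\<psi> lin\<psi>)
  define g where "g = (\<lambda>(s::'k vec2, \<sigma>::'k quat). (\<psi> s, qscal (inverse c) \<sigma>))"
  have rot: "\<psi> \<circ> srot al be a1 a2 s \<sigma> \<circ> \<phi> = srot al be b1 b2 (\<psi> s) (qscal (inverse c) \<sigma>)" for s \<sigma>
  proof
    fix x
    have "hform al be a1 a2 (\<phi> x) s = qscal c (hform al be b1 b2 x (\<psi> s))"
      using h[of x "\<psi> s"] by (simp add: inv2)
    then show "(\<psi> \<circ> srot al be a1 a2 s \<sigma> \<circ> \<phi>) x = srot al be b1 b2 (\<psi> s) (qscal (inverse c) \<sigma>) x"
      using c by (simp add: srot_def sub\<psi> lin\<psi> inv1 qinv_scal qmul_scal_left qmul_scal_right)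
  qed
  define FA :: "'k vec2 \<times> 'k quat \<Rightarrow> ('k vec2 \<Rightarrow> 'k vec2) \<Rightarrow> 'k vec2 \<Rightarrow> 'k vec2" where "FA = (\<lambda>(s,\<sigma>) f. srot al be a1 a2 s \<sigma> \<circ> f)"
  define FB :: "'k vec2 \<times> 'k quat \<Rightarrow> ('k vec2 \<Rightarrow> 'k vec2) \<Rightarrow> 'k vec2 \<Rightarrow> 'k vec2" where "FB = (\<lambda>(s,\<sigma>) f. srot al be b1 b2 s \<sigma> \<circ> f)"
  have fold: "\<psi> \<circ> foldr FA rs' id \<circ> \<phi> = foldr FB (map g rs') id" for rs'
  proof (induction rs')
    case Nil then show ?case by (auto simp: inv1)
  next
    case (Cons a rs')
    obtain s \<sigma> where a: "a = (s,\<sigma>)" by (cases a)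
    have e: "\<psi> \<circ> foldr FA (a#rs') id \<circ> \<phi>
       = (\<psi> \<circ> srot al be a1 a2 s \<sigma> \<circ> \<phi>) \<circ> (\<psi> \<circ> foldr FA rs' id \<circ> \<phi>)"
      by (simp add: a fun_eq_iff inv2 FA_def)
    show ?case unfolding e rot Cons.IH by (simp add: a g_def FB_def del: id_apply)
  qed
  define u' where "u' = \<psi> \<circ> u \<circ> \<phi>"
  have bij\<phi>: "bij \<phi>" by (metis bijI' inv1 inv2)
  have bij\<psi>: "bij \<psi>" by (metis bijI' inv1 inv2)
  have uadd: "\<And>x y. u (vadd x y) = vadd (u x) (u y)"
    and ulin: "\<And>d x. u (vsmul al be d x) = vsmul al be d (u x)"
    and uh: "\<And>x y. hform al be a1 a2 (u x) (u y) = hform al be a1 a2 x y"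
    and ubij: "bij u"
    using iso unfolding isometry_def by blast+
  have isoB: "isometry al be b1 b2 u'"
    unfolding isometry_def
  proof (intro conjI allI)
    show "bij u'" unfolding u'_def using ubij bij\<phi> bij\<psi> by (simp add: bij_comp)
    show "u' (vadd x y) = vadd (u' x) (u' y)" for x y
      by (simp add: u'_def uadd add\<phi> add\<psi>)
    show "u' (vsmul al be d x) = vsmul al be d (u' x)" for d x
      by (simp add: u'_def ulin lin\<phi> lin\<psi>)
    show "hform al be b1 b2 (u' x) (u' y) = hform al be b1 b2 x y" for x y
      using c by (simp add: u'_def uh hB h qscal_qscal)
  qed
  have u'L: "u' ` diag_lattice v al be = diag_lattice v al be"
  proof -
    have "u' ` diag_lattice v al be = \<psi> ` (u ` (\<phi> ` diag_lattice v al be))"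
      by (simp add: u'_def image_comp)
    then show ?thesis by (simp add: L\<phi> uL L\<psi>)
  qed
  have datB: "\<forall>(s,\<sigma>)\<in>set (map g rs). srot_data al be b1 b2 s \<sigma>"
  proof (clarsimp simp: g_def)
    fix s \<sigma> assume "(s,\<sigma>) \<in> set rs"
    then have d: "srot_data al be a1 a2 s \<sigma>" using dat by auto
    show "srot_data al be b1 b2 (\<psi> s) (qscal (inverse c) \<sigma>)"
      using d c by (simp add: srot_data_def qscal_eq0 qsub_conj_scal hB)
  qed
  have u'eq: "u' = foldr (\<lambda>(s,\<sigma>) f. srot al be b1 b2 s \<sigma> \<circ> f) (map g rs) id"
    using fold[of rs] by (simp add: u'_def ueq FA_def FB_def)
  have pr: "prod_list (map (\<lambda>(s,\<sigma>). qnorm al be \<sigma>) (map g rs))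
      = (inverse c ^2)^length rs * prod_list (map (\<lambda>(s,\<sigma>). qnorm al be \<sigma>) rs)"
    unfolding g_def by (rule prod_scal)
  have zeq: "z = prod_list (map (\<lambda>(s,\<sigma>). qnorm al be \<sigma>) (map g rs)) * (c ^ length rs * t)^2"
    using c unfolding pr t(2)
    by (simp add: power_mult_distrib power_mult[symmetric] mult.commute power_inverse)
  show "z \<in> Hgroup v al be b1 b2"
  proof -
    have tt: "c ^ length rs * t \<noteq> 0" using c t(1) by simp
    have "\<exists>rs. (\<forall>(s,\<sigma>)\<in>set rs. srot_data al be b1 b2 s \<sigma>) \<and>
           u' = foldr (\<lambda>(s,\<sigma>) f. srot al be b1 b2 s \<sigma> \<circ> f) rs id \<and>
           (\<exists>t. t \<noteq> 0 \<and> z = prod_list (map (\<lambda>(s,\<sigma>). qnorm al be \<sigma>) rs) * t^2)"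
      apply (rule exI[of _ "map g rs"])
      using datB u'eq zeq tt by blast
    then show ?thesis unfolding Hgroup_def using z0 isoB u'L by blast
  qed
qed



lemma G1:
  fixes \<phi> \<psi> :: "'k::field_char_0 vec2 \<Rightarrow> 'k vec2"
  assumes inv1: "\<And>x. \<psi> (\<phi> x) = x" and inv2: "\<And>x. \<phi> (\<psi> x) = x"
    and add\<psi>: "\<And>x y. \<psi> (vadd x y) = vadd (\<psi> x) (\<psi> y)"
    and lin\<psi>: "\<And>d x. \<psi> (vsmul al be d x) = vsmul al be d (\<psi> x)"
    and add\<phi>: "\<And>x y. \<phi> (vadd x y) = vadd (\<phi> x) (\<phi> y)"
    and lin\<phi>: "\<And>d x. \<phi> (vsmul al be d x) = vsmul al be d (\<phi> x)"
    and L\<phi>: "\<phi> ` diag_lattice v al be = diag_lattice v al be"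
    and L\<psi>: "\<psi> ` diag_lattice v al be = diag_lattice v al be"
    and c: "c \<noteq> 0"
    and h: "\<And>x y. hform al be a1 a2 (\<phi> x) (\<phi> y) = qscal c (hform al be b1 b2 x y)"
  shows "Hgroup v al be a1 a2 = Hgroup v al be b1 b2"
proof
  show "Hgroup v al be a1 a2 \<subseteq> Hgroup v al be b1 b2"
    by (rule G0[OF inv1 inv2 add\<psi> lin\<psi> add\<phi> lin\<phi> L\<phi> L\<psi> c h])
  have hB: "hform al be b1 b2 (\<psi> x) (\<psi> y) = qscal (inverse c) (hform al be a1 a2 x y)" for x y
    using h[of "\<psi> x" "\<psi> y"] c by (simp add: inv2 qscal_qscal)
  show "Hgroup v al be b1 b2 \<subseteq> Hgroup v al be a1 a2"
    by (rule G0[OF inv2 inv1 add\<phi> lin\<phi> add\<psi> lin\<psi> L\<psi> L\<phi> _ hB]) (use c in simp)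
qed

lemma hform_aux: "qmul al be (qmul al be (qmul al be x m) a) (qconj (qmul al be y m))
   = qmul al be (qmul al be x (qmul al be (qmul al be m a) (qconj m))) (qconj y)"
  by (simp add: qconj_mul qmul_assoc)

lemma img_eq: "(\<And>x. x \<in> L \<Longrightarrow> f x \<in> L) \<Longrightarrow> (\<And>x. x \<in> L \<Longrightarrow> g x \<in> L) \<Longrightarrow> (\<And>x. f (g x) = x)
   \<Longrightarrow> f ` L = L"
  by (metis image_eqI subsetI subset_antisym image_subsetI)

lemma rmul_inv: "qnorm al be m \<noteq> 0 \<Longrightarrow> qmul al be (qmul al be x m) (qinv al be m) = x"
  by (simp add: qmul_assoc qinv_right)
lemma rmul_inv2: "qnorm al be m \<noteq> 0 \<Longrightarrow> qmul al be (qmul al be x (qinv al be m)) m = x"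
  by (simp add: qmul_assoc qinv_left)

lemma T:
  fixes v :: "'k::field_char_0 \<Rightarrow> int"
  assumes dl: "dyadic_local_field v"
    and u1: "qunit v al be m1" and u2: "qunit v al be m2" and c: "c \<noteq> 0"
    and h1: "qmul al be (qmul al be m1 a1) (qconj m1) = qscal c b1"
    and h2: "qmul al be (qmul al be m2 a2) (qconj m2) = qscal c b2"
  shows "Hgroup v al be a1 a2 = Hgroup v al be b1 b2"
proof -
  define \<phi> :: "'k vec2 \<Rightarrow> 'k vec2" where "\<phi> x = (qmul al be (fst x) m1, qmul al be (snd x) m2)" for x
  define \<psi> :: "'k vec2 \<Rightarrow> 'k vec2" where "\<psi> x = (qmul al be (fst x) (qinv al be m1), qmul al be (snd x) (qinv al be m2))" for x
  have n1: "qnorm al be m1 \<noteq> 0" and n2: "qnorm al be m2 \<noteq> 0" using u1 u2 by (auto simp: qunit_def)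
  have i1: "qunit v al be (qinv al be m1)" and i2: "qunit v al be (qinv al be m2)"
    using u1 u2 dl by (auto intro: qunit_inv)
  have inv1: "\<psi> (\<phi> x) = x" for x using n1 n2 by (simp add: \<phi>_def \<psi>_def rmul_inv)
  have inv2: "\<phi> (\<psi> x) = x" for x using n1 n2 by (simp add: \<phi>_def \<psi>_def rmul_inv2)
  have L1: "\<phi> x \<in> diag_lattice v al be" if "x \<in> diag_lattice v al be" for x
    using that max_order_mul[OF dl u1] max_order_mul[OF dl u2]
    by (auto simp: \<phi>_def diag_lattice_def mem_Times_iff)
  have L2: "\<psi> x \<in> diag_lattice v al be" if "x \<in> diag_lattice v al be" for x
    using that max_order_mul[OF dl i1] max_order_mul[OF dl i2]
    by (auto simp: \<psi>_def diag_lattice_def mem_Times_iff)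
  show ?thesis
  proof (rule G1[of \<psi> \<phi>])
    show "\<psi> (\<phi> x) = x" for x by (rule inv1)
    show "\<phi> (\<psi> x) = x" for x by (rule inv2)
    show "\<psi> (vadd x y) = vadd (\<psi> x) (\<psi> y)" for x y by (simp add: \<psi>_def vadd_def qmul_add_left)
    show "\<phi> (vadd x y) = vadd (\<phi> x) (\<phi> y)" for x y by (simp add: \<phi>_def vadd_def qmul_add_left)
    show "\<psi> (vsmul al be d x) = vsmul al be d (\<psi> x)" for d x by (simp add: \<psi>_def vsmul_def qmul_assoc)
    show "\<phi> (vsmul al be d x) = vsmul al be d (\<phi> x)" for d x by (simp add: \<phi>_def vsmul_def qmul_assoc)
    show "\<phi> ` diag_lattice v al be = diag_lattice v al be" by (rule img_eq[OF L1 L2 inv2])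
    show "\<psi> ` diag_lattice v al be = diag_lattice v al be" by (rule img_eq[OF L2 L1 inv1])
    show "c \<noteq> 0" by (rule c)
    show "hform al be a1 a2 (\<phi> x) (\<phi> y) = qscal c (hform al be b1 b2 x y)" for x y
      by (simp add: \<phi>_def hform_def hform_aux h1 h2 qmul_scal_left qmul_scal_right qscal_add)
  qed
qed



lemma comm_sub: "qmul al be a (qadd (qof x) (qscal y a)) = qmul al be (qadd (qof x) (qscal y a)) a"
  by (cases a) (simp add: qof_def algebra_simps)

lemma qpure_scal: "qpure p \<Longrightarrow> qpure (qscal c p)"
  by (cases p) (simp add: qpure_def)

lemma core:
  fixes v :: "'k::field_char_0 \<Rightarrow> int"
  assumes dl: "dyadic_local_field v" and qd: "quat_division al be"
    and pa: "qpure a" and pb: "qpure b" and t: "t \<noteq> 0"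
    and nb: "qnorm al be b = qnorm al be a * t^2"
    and ram: "ramified_ext v al be a"
  shows "\<exists>m \<epsilon>. qunit v al be m \<and> \<epsilon> \<noteq> 0 \<and> qmul al be (qmul al be m b) (qconj m) = qscal \<epsilon> a"
proof -
  define b' where "b' = qscal (inverse t) b"
  have bb': "b = qscal t b'" using t by (simp add: b'_def qscal_qscal)
  have pb': "qpure b'" unfolding b'_def by (rule qpure_scal[OF pb])
  have nb': "qnorm al be b' = qnorm al be a" using t
    by (simp add: b'_def qnorm_scal nb power_inverse field_simps)
  define \<mu> where "\<mu> = qadd a b'"
  have key1: "qmul al be b' \<mu> = qmul al be \<mu> a"
    unfolding \<mu>_def qmul_add_left qmul_add_right pure_sq[OF pa] pure_sq[OF pb'] nb'
    by (rule qadd_comm)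
  show ?thesis
  proof (cases "\<mu> = Q0")
    case True
    then have "b' = qscal (-1) a" unfolding \<mu>_def by (cases a; cases b') (simp add: add_eq_0_iff)
    then have "b = qscal (-t) a" using bb' by (simp add: qscal_qscal)
    then show ?thesis using t dl
      by (intro exI[of _ "qof 1"] exI[of _ "-t"]) (simp add: qunit_def vone)
  next
    case False
    then have nmu: "qnorm al be \<mu> \<noteq> 0" using qnorm_zero[OF qd] by auto
    obtain e0 where e0: "e0 \<in> qsubfield a" "e0 \<noteq> Q0" "ext_val v al be e0 \<notin> \<int>"
      using ram by (auto simp: ramified_ext_def)
    obtain x0 y0 where exy: "e0 = qadd (qof x0) (qscal y0 a)" using e0(1) by (auto simp: qsubfield_def)
    have ne0: "qnorm al be e0 \<noteq> 0" using e0(2) qnorm_zero[OF qd] by auto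
    have odd: "odd (v (qnorm al be e0))"
    proof
      assume "even (v (qnorm al be e0))"
      then obtain k where "v (qnorm al be e0) = 2 * k" by (auto elim: evenE)
      then have "ext_val v al be e0 = of_int k" by (simp add: ext_val_def)
      then show False using e0(3) by simp
    qed
    have "\<exists>x y. qnorm al be (qadd (qof x) (qscal y a)) \<noteq> 0 \<and>
        v (qnorm al be (qadd (qof x) (qscal y a))) = - v (qnorm al be \<mu>)"
    proof (cases "even (v (qnorm al be \<mu>))")
      case True
      then obtain k where k: "v (qnorm al be \<mu>) = 2 * k" by (auto elim: evenE)
      obtain s where s: "s \<noteq> 0" "v s = - k" using vsurj[OF dl] by blast
      have "qadd (qof s) (qscal 0 a) = qof s" by (cases a) (simp add: qof_def)
      then show ?thesis using s k vpow[OF dl s(1), of 2]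
        by (intro exI[of _ s] exI[of _ 0]) simp
    next
      case False
      then have "even (- v (qnorm al be \<mu>) - v (qnorm al be e0))" using odd by simp
      then obtain k where k: "- v (qnorm al be \<mu>) - v (qnorm al be e0) = 2 * k" by (blast elim: evenE)
      obtain s where s: "s \<noteq> 0" "v s = k" using vsurj[OF dl] by blast
      have eq: "qadd (qof (s*x0)) (qscal (s*y0) a) = qscal s e0"
        unfolding exy by (cases a) (simp add: qof_def algebra_simps)
      have "v (qnorm al be (qscal s e0)) = - v (qnorm al be \<mu>)"
        using s k ne0 vpow[OF dl s(1), of 2] by (simp add: qnorm_scal vmult[OF dl])
      then show ?thesis using eq s ne0
        by (intro exI[of _ "s*x0"] exI[of _ "s*y0"]) (simp add: qnorm_scal)
    qed
    then obtain x y where cxy: "qnorm al be (qadd (qof x) (qscal y a)) \<noteq> 0"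
      "v (qnorm al be (qadd (qof x) (qscal y a))) = - v (qnorm al be \<mu>)" by blast
    define c where "c = qadd (qof x) (qscal y a)"
    define \<mu>' where "\<mu>' = qmul al be \<mu> c"
    have key2: "qmul al be b' \<mu>' = qmul al be \<mu>' a"
      unfolding \<mu>'_def c_def
      by (simp add: qmul_assoc[symmetric] key1) (simp add: qmul_assoc comm_sub)
    have un: "qunit v al be (qconj \<mu>')"
      using cxy nmu by (simp add: qunit_def \<mu>'_def c_def qnorm_mul vmult[OF dl])
    have "qmul al be (qmul al be (qconj \<mu>') b) (qconj (qconj \<mu>'))
        = qscal t (qmul al be (qmul al be (qconj \<mu>') \<mu>') a)"
      by (simp add: bb' qmul_scal_left qmul_scal_right qmul_assoc key2)
    also have "\<dots> = qscal (t * qnorm al be \<mu>') a"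
      by (simp add: qmul_conj_left qmul_qof_left qscal_qscal)
    finally show ?thesis using un t
      by (intro exI[of _ "qconj \<mu>'"] exI[of _ "t * qnorm al be \<mu>'"]) (simp add: qunit_def)
  qed
qed



theorem lemma4p2:
  fixes v :: "'k::field_char_0 \<Rightarrow> int" and \<alpha> \<beta> :: 'k and a1 a2 :: "'k quat"
  assumes "dyadic_local_field v"
    and "quat_division \<alpha> \<beta>"
    and "qpure a1" and "a1 \<noteq> Quat 0 0 0 0"
    and "qpure a2" and "a2 \<noteq> Quat 0 0 0 0"
    and "\<exists>t. t \<noteq> 0 \<and> qnorm \<alpha> \<beta> a2 = qnorm \<alpha> \<beta> a1 * t^2"
    and "ramified_ext v \<alpha> \<beta> a1"
  shows "(\<exists>q \<epsilon>. qpure q \<and> q \<noteq> Quat 0 0 0 0 \<and> \<epsilon> \<noteq> 0 \<and>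
            Hgroup v \<alpha> \<beta> a1 a2 = Hgroup v \<alpha> \<beta> q (qscal \<epsilon> q)) \<and>
         (\<forall>q'. qpure q' \<and> q' \<noteq> Quat 0 0 0 0 \<and>
             (\<exists>t. t \<noteq> 0 \<and> qnorm \<alpha> \<beta> q' = qnorm \<alpha> \<beta> a1 * t^2) \<longrightarrow>
           (\<exists>\<epsilon>. \<epsilon> \<noteq> 0 \<and> Hgroup v \<alpha> \<beta> a1 a2 = Hgroup v \<alpha> \<beta> q' (qscal \<epsilon> q')))"
proof -
  note dl = assms(1) and qd = assms(2)
  obtain t where t: "t \<noteq> 0" "qnorm \<alpha> \<beta> a2 = qnorm \<alpha> \<beta> a1 * t^2" using assms(7) by blast
  obtain m2 \<epsilon> where m2: "qunit v \<alpha> \<beta> m2" "\<epsilon> \<noteq> 0"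
    "qmul \<alpha> \<beta> (qmul \<alpha> \<beta> m2 a2) (qconj m2) = qscal \<epsilon> a1"
    using core[OF dl qd assms(3) assms(5) t assms(8)] by blast
  have u1: "qunit v \<alpha> \<beta> (qof 1)" using dl by (simp add: qunit_def vone)
  have P1: "Hgroup v \<alpha> \<beta> a1 a2 = Hgroup v \<alpha> \<beta> a1 (qscal \<epsilon> a1)"
    by (rule T[OF dl u1 m2(1), of 1]) (simp_all add: m2(3))
  have P2: "\<exists>\<epsilon>. \<epsilon> \<noteq> 0 \<and> Hgroup v \<alpha> \<beta> a1 a2 = Hgroup v \<alpha> \<beta> q' (qscal \<epsilon> q')"
    if q': "qpure q'" "\<exists>s. s \<noteq> 0 \<and> qnorm \<alpha> \<beta> q' = qnorm \<alpha> \<beta> a1 * s^2" for q'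
  proof -
    obtain s where s: "s \<noteq> 0" "qnorm \<alpha> \<beta> q' = qnorm \<alpha> \<beta> a1 * s^2" using q'(2) by blast
    obtain m \<epsilon>' where m: "qunit v \<alpha> \<beta> m" "\<epsilon>' \<noteq> 0"
      "qmul \<alpha> \<beta> (qmul \<alpha> \<beta> m q') (qconj m) = qscal \<epsilon>' a1"
      using core[OF dl qd assms(3) q'(1) s assms(8)] by blast
    define N where "N = qnorm \<alpha> \<beta> m"
    have N0: "N \<noteq> 0" using m(1) by (simp add: qunit_def N_def)
    define c where "c = inverse \<epsilon>' * N^2"
    have c0: "c \<noteq> 0" using N0 m(2) by (simp add: c_def)
    have a1eq: "a1 = qscal (inverse \<epsilon>') (qmul \<alpha> \<beta> (qmul \<alpha> \<beta> m q') (qconj m))"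
      using m(2) by (simp add: m(3) qscal_qscal)
    have h1: "qmul \<alpha> \<beta> (qmul \<alpha> \<beta> (qconj m) a1) (qconj (qconj m)) = qscal c q'"
    proof -
      have "qmul \<alpha> \<beta> (qmul \<alpha> \<beta> (qconj m) a1) m =
          qscal (inverse \<epsilon>') (qmul \<alpha> \<beta> (qmul \<alpha> \<beta> (qmul \<alpha> \<beta> (qconj m) m) q') (qmul \<alpha> \<beta> (qconj m) m))"
        by (subst a1eq) (simp add: qmul_scal_left qmul_scal_right qmul_assoc)
      also have "\<dots> = qscal c q'"
        by (simp add: qmul_conj_left qmul_qof_left qmul_qof_right qmul_scal_left qscal_qscal c_def N_def
            power2_eq_square mult.commute mult.left_commute)
      finally show ?thesis by simp
    qed
    have h2: "qmul \<alpha> \<beta> (qmul \<alpha> \<beta> (qmul \<alpha> \<beta> (qconj m) m2) a2) (qconj (qmul \<alpha> \<beta> (qconj m) m2)) = qscal c (qscal \<epsilon> q')"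
    proof -
      have "qmul \<alpha> \<beta> (qmul \<alpha> \<beta> (qmul \<alpha> \<beta> (qconj m) m2) a2) (qconj (qmul \<alpha> \<beta> (qconj m) m2))
          = qmul \<alpha> \<beta> (qmul \<alpha> \<beta> (qconj m) (qmul \<alpha> \<beta> (qmul \<alpha> \<beta> m2 a2) (qconj m2))) m"
        by (simp add: qconj_mul qmul_assoc)
      also have "\<dots> = qscal \<epsilon> (qmul \<alpha> \<beta> (qmul \<alpha> \<beta> (qconj m) a1) (qconj (qconj m)))"
        by (simp add: m2(3) qmul_scal_left qmul_scal_right)
      also have "\<dots> = qscal c (qscal \<epsilon> q')" using h1 by (simp add: qscal_qscal mult.commute)
      finally show ?thesis .
    qed
    have un1: "qunit v \<alpha> \<beta> (qconj m)" using m(1) by (simp add: qunit_def)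
    have un2: "qunit v \<alpha> \<beta> (qmul \<alpha> \<beta> (qconj m) m2)" by (rule qunit_mul[OF dl un1 m2(1)])
    show ?thesis using T[OF dl un1 un2 c0 h1 h2] m2(2) by blast
  qed
  show ?thesis
    using P1 P2 assms(3,4) m2(2) by blast
qed

end
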